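(* Let $(\mathcal{X},\mathcal{B},\lambda)$ be a measure space with $\lambda$ positive and $\sigma$-finite, $P$ a probability measure with density $f\in\mathcal{L}^2(\mathcal{X},\lambda)$ with respect to $\lambda$, and $X_1,\dots,X_N$ i.i.d. with law $P$. Let $f_1,\dots,f_m\in\mathcal{L}^2$ with $D_k=\int f_k^2d\lambda>0$, and assume there are known constants $C_k>0$ with $|f_k(x)|\le\sqrt{C_kD_k}$ for all $x\in\mathcal{X}$ and all $k$. Let $\varepsilon>0$ and, for each $k$, let $\beta_{k,1},\beta_{k,2}$ be real numbers with $0<\beta_{k,j}<\frac{N}{\sqrt{C_kD_k}}$, $j\in\{1,2\}$. Then with $P^{\otimes N}$-probability at least $1-\varepsilon$, for all $k\in\{1,\dots,m\}$, $$\alpha^{\inf}_k(\varepsilon,\beta_{k,1})\le\overline{\alpha}_k\le\alpha^{\sup}_k(\varepsilon,\beta_{k,2}),$$ where $$\alpha^{\sup}_k(\varepsilon,\beta)=\frac{N-N\exp\left[\frac1N\sum_{i=1}^N\log\left(1-\frac{\beta}{N}f_k(X_i)\right)-\frac{\log\frac{2m}{\varepsilon}}{N}\right]}{D_k\beta},$$ $$\alpha^{\inf}_k(\varepsilon,\beta)=\frac{N\exp\left[\frac1N\sum_{i=1}^N\log\left(1+\frac{\beta}{N}f_k(X_i)\right)-\frac{\log\frac{2m}{\varepsilon}}{N}\right]-N}{D_k\beta}.$$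
   Context: $\overline{\alpha}_k=\arg\min_{\alpha\in\mathbb{R}}\int(\alpha f_k-f)^2d\lambda=\frac{\int f_kf\,d\lambda}{D_k}$. *)

theory Defs
  imports "HOL-Probability.Probability"
begin

text \<open>Upper confidence bound; g i stands for f_k(X_i), i < N; D = D_k; m = number of functions.\<close>
definition alpha_sup :: "nat \<Rightarrow> nat \<Rightarrow> real \<Rightarrow> real \<Rightarrow> real \<Rightarrow> (nat \<Rightarrow> real) \<Rightarrow> real" where
  "alpha_sup N m D eps beta g =
     (real N - real N * exp ((1 / real N) * (\<Sum>i<N. ln (1 - beta / real N * g i))
                              - ln (2 * real m / eps) / real N)) / (D * beta)"

definition alpha_inf :: "nat \<Rightarrow> nat \<Rightarrow> real \<Rightarrow> real \<Rightarrow> real \<Rightarrow> (nat \<Rightarrow> real) \<Rightarrow> real" where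
  "alpha_inf N m D eps beta g =
     (real N * exp ((1 / real N) * (\<Sum>i<N. ln (1 + beta / real N * g i))
                    - ln (2 * real m / eps) / real N) - real N) / (D * beta)"

text \<open>The L2-projection coefficient: argmin over alpha of the integral of (alpha f_k - f)^2.\<close>
definition alpha_bar :: "'a measure \<Rightarrow> ('a \<Rightarrow> real) \<Rightarrow> ('a \<Rightarrow> real) \<Rightarrow> real" where
  "alpha_bar lam f fk = (\<integral>x. fk x * f x \<partial>lam) / (\<integral>x. (fk x)\<^sup>2 \<partial>lam)"

end

theory Submission
  imports Defs
begin

lemma markov_side:
  fixes P :: "'a measure" and g :: "'a \<Rightarrow> real"
  assumes P: "prob_space P" and g: "g \<in> borel_measurable P"
    and gb: "\<And>x. x \<in> space P \<Longrightarrow> \<bar>g x\<bar> \<le> B"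
    and bpos: "0 < beta" and bB: "beta * B < real N" and eps: "eps > 0" and m: "m \<ge> (1::nat)"
  defines "M \<equiv> PiM {..<N} (\<lambda>_. P)"
  defines "a \<equiv> 1 - beta / real N * (\<integral>x. g x \<partial>P)"
  defines "bad \<equiv> {\<omega> \<in> space M. a ^ N * (2 * real m / eps) \<le> (\<Prod>i<N. 1 - beta / real N * g (\<omega> i))}"
  shows "bad \<in> sets M" "measure M bad \<le> eps / (2 * real m)"
    "\<And>\<omega>. \<omega> \<in> space M \<Longrightarrow> \<omega> \<notin> bad \<Longrightarrow>
       exp ((1 / real N) * (\<Sum>i<N. ln (1 - beta / real N * g (\<omega> i))) - ln (2 * real m / eps) / real N) < a"
proof -
  interpret P: prob_space P by (rule P)
  interpret PS: product_sigma_finite "\<lambda>_. P"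
    by unfold_locales
  have MP: "prob_space M" unfolding M_def by (rule prob_space_PiM) (rule P)
  interpret MP: prob_space M by (rule MP)
  have B0: "0 \<le> B" using gb[of "SOME x. x \<in> space P"] P.not_empty
    by (metis abs_ge_zero order.trans some_in_eq)
  have Npos: "0 < real N" using bB bpos B0
    by (metis mult_nonneg_nonneg less_le_not_le of_nat_0_le_iff order_le_less_trans linorder_not_le)
  define h where "h x = 1 - beta / real N * g x" for x
  have small: "\<bar>beta / real N * g x\<bar> < 1" if "x \<in> space P" for x
  proof -
    have "\<bar>beta / real N * g x\<bar> = beta * \<bar>g x\<bar> / real N" using bpos Npos by (simp add: abs_mult)
    also have "\<dots> \<le> beta * B / real N" using gb[OF that] bpos Npos
      by (intro divide_right_mono mult_left_mono) auto
    also have "\<dots> < 1" using bB Npos by simp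
    finally show ?thesis .
  qed
  have hpos: "0 < h x" "h x \<le> 2" if "x \<in> space P" for x
    using small[OF that] abs_less_iff[of "beta / real N * g x" 1] unfolding h_def by linarith+
  have hlow: "1 - beta * B / real N \<le> h x" if "x \<in> space P" for x
  proof -
    have "beta / real N * g x \<le> beta * B / real N"
      using gb[OF that] bpos Npos by (simp add: divide_right_mono mult_left_mono)
    then show ?thesis unfolding h_def by simp
  qed
  have hm[measurable]: "h \<in> borel_measurable P" unfolding h_def using g by measurable
  have gi: "integrable P g"
    by (rule P.integrable_const_bound[where B=B]) (use gb g in auto)
  have hi: "integrable P h"
    by (rule P.integrable_const_bound[where B=2]) (use hpos in \<open>auto intro!: AE_I2 simp: abs_le_iff less_imp_le\<close>)
  have ha: "(\<integral>x. h x \<partial>P) = a"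
    unfolding h_def a_def using gi by (simp add: P.prob_space)
  have apos: "0 < a"
  proof -
    have "1 - beta * B / real N \<le> a" unfolding ha[symmetric]
      by (rule P.integral_ge_const[OF hi]) (use hlow in auto)
    moreover have "0 < 1 - beta * B / real N" using bB Npos by simp
    ultimately show ?thesis by linarith
  qed
  define Z where "Z \<omega> = (\<Prod>i<N. h (\<omega> i))" for \<omega>
  have Zm[measurable]: "Z \<in> borel_measurable M" unfolding Z_def M_def by measurable
  have Zpos: "0 < Z \<omega>" if "\<omega> \<in> space M" for \<omega>
    unfolding Z_def using that hpos by (auto simp: M_def space_PiM intro!: prod_pos)
  have Zb: "Z \<omega> \<le> 2 ^ N" if "\<omega> \<in> space M" for \<omega>
  proof -
    have "Z \<omega> \<le> (\<Prod>i<N. 2)" unfolding Z_def using that hpos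
      by (intro prod_mono) (auto simp: M_def space_PiM PiE_iff intro: less_imp_le)
    then show ?thesis by simp
  qed
  have Zi: "integrable M Z"
    by (rule MP.integrable_const_bound[where B="2^N"]) (use Zpos Zb in \<open>auto intro!: AE_I2 simp: abs_le_iff less_imp_le\<close>)
  have EZ: "(\<integral>\<omega>. Z \<omega> \<partial>M) = a ^ N"
    unfolding Z_def M_def using PS.product_integral_prod[of "{..<N}" "\<lambda>_. h"] hi ha by simp
  define c where "c = a ^ N * (2 * real m / eps)"
  have cpos: "0 < c" unfolding c_def using apos eps m by auto
  have bad_eq: "bad = {\<omega> \<in> space M. c \<le> Z \<omega>}" unfolding bad_def c_def Z_def h_def by simp
  show "bad \<in> sets M" unfolding bad_eq by measurable
  have "measure M bad \<le> (\<integral>\<omega>. Z \<omega> \<partial>M) / c" unfolding bad_eq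
    by (rule integral_Markov_inequality_measure[OF Zi _ _ cpos, where A="space M"])
       (use Zpos in \<open>auto simp: less_imp_le\<close>)
  also have "\<dots> = eps / (2 * real m)" unfolding EZ c_def using apos eps m by (simp add: field_simps)
  finally show "measure M bad \<le> eps / (2 * real m)" .
  fix \<omega> assume om: "\<omega> \<in> space M" "\<omega> \<notin> bad"
  have "Z \<omega> < c" using om unfolding bad_eq by auto
  hence "ln (Z \<omega>) < ln c" using Zpos[OF om(1)] by simp
  moreover have "ln (Z \<omega>) = (\<Sum>i<N. ln (h (\<omega> i)))" unfolding Z_def
    using om(1) hpos by (intro ln_prod) (auto simp: M_def space_PiM dest!: less_imp_neq[OF hpos(1)])
  moreover have "ln c = real N * ln a + ln (2 * real m / eps)"
  proof -
    have "0 < 2 * real m / eps" using eps m by simp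
    moreover have "0 < a ^ N" using apos by simp
    ultimately have "ln c = ln (a ^ N) + ln (2 * real m / eps)" unfolding c_def by (simp only: ln_mult_pos)
    then show ?thesis using apos by (simp add: ln_realpow)
  qed
  ultimately have "(\<Sum>i<N. ln (h (\<omega> i))) < real N * ln a + ln (2 * real m / eps)" by simp
  hence "(1 / real N) * (\<Sum>i<N. ln (h (\<omega> i))) - ln (2 * real m / eps) / real N < ln a"
    using Npos by (simp add: field_simps)
  hence "exp ((1 / real N) * (\<Sum>i<N. ln (h (\<omega> i))) - ln (2 * real m / eps) / real N) < exp (ln a)"
    by simp
  then show "exp ((1 / real N) * (\<Sum>i<N. ln (1 - beta / real N * g (\<omega> i))) - ln (2 * real m / eps) / real N) < a"
    using apos unfolding h_def by simp
qed


theorem theorem4: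
  fixes lam :: "'a measure" and P :: "'a measure" and f :: "'a \<Rightarrow> real"
    and N m :: nat and fk :: "nat \<Rightarrow> 'a \<Rightarrow> real" and C D beta1 beta2 :: "nat \<Rightarrow> real"
    and eps :: real
  assumes sf: "sigma_finite_measure lam"
    and f_meas: "f \<in> borel_measurable lam"
    and f_nonneg: "AE x in lam. f x \<ge> 0"
    and f_L2: "integrable lam (\<lambda>x. (f x)\<^sup>2)"
    and P_def: "P = density lam (\<lambda>x. ennreal (f x))"
    and P_prob: "prob_space P"
    and fk_meas: "\<And>k. k \<in> {1..m} \<Longrightarrow> fk k \<in> borel_measurable lam"
    and fk_L2: "\<And>k. k \<in> {1..m} \<Longrightarrow> integrable lam (\<lambda>x. (fk k x)\<^sup>2)"
    and D_def: "\<And>k. k \<in> {1..m} \<Longrightarrow> D k = (\<integral>x. (fk k x)\<^sup>2 \<partial>lam)"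
    and D_pos: "\<And>k. k \<in> {1..m} \<Longrightarrow> D k > 0"
    and C_pos: "\<And>k. k \<in> {1..m} \<Longrightarrow> C k > 0"
    and fk_bound: "\<And>k x. k \<in> {1..m} \<Longrightarrow> x \<in> space lam \<Longrightarrow> \<bar>fk k x\<bar> \<le> sqrt (C k * D k)"
    and eps_pos: "eps > 0"
    and beta1: "\<And>k. k \<in> {1..m} \<Longrightarrow> 0 < beta1 k \<and> beta1 k < real N / sqrt (C k * D k)"
    and beta2: "\<And>k. k \<in> {1..m} \<Longrightarrow> 0 < beta2 k \<and> beta2 k < real N / sqrt (C k * D k)"
  shows "measure (PiM {..<N} (\<lambda>_. P))
           {\<omega> \<in> space (PiM {..<N} (\<lambda>_. P)).
              \<forall>k \<in> {1..m}.
                alpha_inf N m (D k) eps (beta1 k) (\<lambda>i. fk k (\<omega> i)) \<le> alpha_bar lam f (fk k)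
              \<and> alpha_bar lam f (fk k) \<le> alpha_sup N m (D k) eps (beta2 k) (\<lambda>i. fk k (\<omega> i))}
         \<ge> 1 - eps"
proof -
  define M where "M = PiM {..<N} (\<lambda>_. P)"
  interpret P: prob_space P by (rule P_prob)
  have MP: "prob_space M" unfolding M_def by (rule prob_space_PiM) (rule P_prob)
  interpret MP: prob_space M by (rule MP)
  have sP: "sets P = sets lam" "space P = space lam" unfolding P_def by auto
  have fkP: "fk k \<in> borel_measurable P" if "k \<in> {1..m}" for k
    using fk_meas[OF that] measurable_cong_sets[OF sP(1) refl] by blast
  define S where "S = {\<omega> \<in> space M.
              \<forall>k \<in> {1..m}.
                alpha_inf N m (D k) eps (beta1 k) (\<lambda>i. fk k (\<omega> i)) \<le> alpha_bar lam f (fk k)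
              \<and> alpha_bar lam f (fk k) \<le> alpha_sup N m (D k) eps (beta2 k) (\<lambda>i. fk k (\<omega> i))}"
  have Smeas: "S \<in> sets M"
  proof -
    have "Measurable.pred M (\<lambda>\<omega>. \<forall>k \<in> {1..m}.
                alpha_inf N m (D k) eps (beta1 k) (\<lambda>i. fk k (\<omega> i)) \<le> alpha_bar lam f (fk k)
              \<and> alpha_bar lam f (fk k) \<le> alpha_sup N m (D k) eps (beta2 k) (\<lambda>i. fk k (\<omega> i)))"
    proof (rule pred_intros_finite, simp)
      fix k assume k: "k \<in> {1..m}"
      note [measurable] = fkP[OF k]
      show "Measurable.pred M (\<lambda>\<omega>. 
                alpha_inf N m (D k) eps (beta1 k) (\<lambda>i. fk k (\<omega> i)) \<le> alpha_bar lam f (fk k)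
              \<and> alpha_bar lam f (fk k) \<le> alpha_sup N m (D k) eps (beta2 k) (\<lambda>i. fk k (\<omega> i)))"
        unfolding alpha_inf_def alpha_sup_def M_def by measurable
    qed
    then show ?thesis unfolding S_def by measurable
  qed
  define A where "A k = {\<omega> \<in> space M. (1 - beta2 k / real N * (\<integral>x. fk k x \<partial>P)) ^ N * (2 * real m / eps)
      \<le> (\<Prod>i<N. 1 - beta2 k / real N * fk k (\<omega> i))}" for k
  define B where "B k = {\<omega> \<in> space M. (1 - beta1 k / real N * (\<integral>x. - fk k x \<partial>P)) ^ N * (2 * real m / eps)
      \<le> (\<Prod>i<N. 1 - beta1 k / real N * - fk k (\<omega> i))}" for k
  have key: "A k \<in> sets M \<and> measure M (A k) \<le> eps / (2 * real m) \<and>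
             B k \<in> sets M \<and> measure M (B k) \<le> eps / (2 * real m) \<and>
             (\<forall>\<omega> \<in> space M. \<omega> \<notin> A k \<and> \<omega> \<notin> B k \<longrightarrow>
                alpha_inf N m (D k) eps (beta1 k) (\<lambda>i. fk k (\<omega> i)) \<le> alpha_bar lam f (fk k)
              \<and> alpha_bar lam f (fk k) \<le> alpha_sup N m (D k) eps (beta2 k) (\<lambda>i. fk k (\<omega> i)))"
    if k: "k \<in> {1..m}" for k
  proof -
    have m1: "1 \<le> m" using k by simp
    define Bd where "Bd = sqrt (C k * D k)"
    have Bdpos: "0 < Bd" unfolding Bd_def using C_pos[OF k] D_pos[OF k] by simp
    have b1: "0 < beta1 k" "beta1 k * Bd < real N"
      using beta1[OF k] Bdpos unfolding Bd_def[symmetric] by (auto simp: pos_less_divide_eq)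
    have b2: "0 < beta2 k" "beta2 k * Bd < real N"
      using beta2[OF k] Bdpos unfolding Bd_def[symmetric] by (auto simp: pos_less_divide_eq)
    have Npos: "0 < real N" using b1 Bdpos by (smt (verit) mult_pos_pos)
    have gb: "\<bar>fk k x\<bar> \<le> Bd" if "x \<in> space P" for x using fk_bound[OF k] that sP unfolding Bd_def by auto
    have gb': "\<bar>- fk k x\<bar> \<le> Bd" if "x \<in> space P" for x using gb[OF that] by simp
    have fkmP: "(\<lambda>x. - fk k x) \<in> borel_measurable P" using fkP[OF k] by measurable
    note RA = markov_side[OF P_prob fkP[OF k] gb b2 eps_pos m1, folded M_def A_def]
    note RB = markov_side[OF P_prob fkmP gb' b1 eps_pos m1, folded M_def B_def]
    have EP: "(\<integral>x. fk k x \<partial>P) = (\<integral>x. fk k x * f x \<partial>lam)"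
      unfolding P_def using integral_density[OF fk_meas[OF k] f_meas f_nonneg]
      by (simp add: mult.commute)
    have Ea: "(\<integral>x. fk k x \<partial>P) = D k * alpha_bar lam f (fk k)"
      unfolding EP alpha_bar_def D_def[OF k, symmetric] using D_pos[OF k] by simp
    have Em: "(\<integral>x. - fk k x \<partial>P) = - (D k * alpha_bar lam f (fk k))" using Ea by simp
    have DB: "0 < D k * beta1 k" "0 < D k * beta2 k" using D_pos[OF k] b1 b2 by auto
    show ?thesis
    proof (intro conjI ballI impI)
      fix \<omega> assume om: "\<omega> \<in> space M" "\<omega> \<notin> A k \<and> \<omega> \<notin> B k"
      define X where "X = (1 / real N) * (\<Sum>i<N. ln (1 - beta2 k / real N * fk k (\<omega> i))) - ln (2 * real m / eps) / real N"
      define Y where "Y = (1 / real N) * (\<Sum>i<N. ln (1 + beta1 k / real N * fk k (\<omega> i))) - ln (2 * real m / eps) / real N"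
      have hX: "exp X < 1 - beta2 k / real N * (D k * alpha_bar lam f (fk k))"
        proof -
        have "\<omega> \<notin> {\<omega> \<in> space M. (1 - beta2 k / real N * (\<integral>x. fk k x \<partial>P)) ^ N * (2 * real m / eps)
          \<le> (\<Prod>i<N. 1 - beta2 k / real N * fk k (\<omega> i))}" using om(2) unfolding A_def by blast
        then show ?thesis using RA(3)[of \<omega>] om(1) unfolding X_def Ea by blast
      qed
      have hY: "exp Y < 1 + beta1 k / real N * (D k * alpha_bar lam f (fk k))"
        proof -
        have "\<omega> \<notin> {\<omega> \<in> space M. (1 - beta1 k / real N * (\<integral>x. - fk k x \<partial>P)) ^ N * (2 * real m / eps)
          \<le> (\<Prod>i<N. 1 - beta1 k / real N * - fk k (\<omega> i))}" using om(2) unfolding B_def by blast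
        then show ?thesis using RB(3)[of \<omega>] om(1) unfolding Y_def Em by simp
      qed
      have "real N * exp X < real N - beta2 k * (D k * alpha_bar lam f (fk k))"
        using hX Npos by (simp add: field_simps)
      then have up: "alpha_bar lam f (fk k) \<le> (real N - real N * exp X) / (D k * beta2 k)"
        using DB by (simp add: pos_le_divide_eq algebra_simps)
      have "real N * exp Y < real N + beta1 k * (D k * alpha_bar lam f (fk k))"
        using hY Npos by (simp add: field_simps)
      then have lo: "(real N * exp Y - real N) / (D k * beta1 k) \<le> alpha_bar lam f (fk k)"
        using DB by (simp add: pos_divide_le_eq algebra_simps)
      show "alpha_inf N m (D k) eps (beta1 k) (\<lambda>i. fk k (\<omega> i)) \<le> alpha_bar lam f (fk k)"
        using lo unfolding alpha_inf_def Y_def .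
      show "alpha_bar lam f (fk k) \<le> alpha_sup N m (D k) eps (beta2 k) (\<lambda>i. fk k (\<omega> i))"
        using up unfolding alpha_sup_def X_def .
    next
      show "A k \<in> sets M" unfolding A_def M_def by (rule markov_side(1)[OF P_prob fkP[OF k] gb b2 eps_pos m1])
    next
      show "measure M (A k) \<le> eps / (2 * real m)" unfolding A_def M_def by (rule markov_side(2)[OF P_prob fkP[OF k] gb b2 eps_pos m1])
    next
      show "B k \<in> sets M" unfolding B_def M_def by (rule markov_side(1)[OF P_prob fkmP gb' b1 eps_pos m1])
    next
      show "measure M (B k) \<le> eps / (2 * real m)" unfolding B_def M_def by (rule markov_side(2)[OF P_prob fkmP gb' b1 eps_pos m1])
    qed
  qed
  define U where "U = (\<Union>k\<in>{1..m}. A k \<union> B k)"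
  have Usets: "U \<in> sets M" unfolding U_def using key by (intro sets.finite_UN) auto
  have sub: "space M - U \<subseteq> S" unfolding S_def U_def using key by blast
  have "measure M U \<le> (\<Sum>k\<in>{1..m}. measure M (A k \<union> B k))"
    unfolding U_def by (rule MP.finite_measure_subadditive_finite) (use key in auto)
  also have "\<dots> \<le> (\<Sum>k\<in>{1..m}. eps / real m)"
  proof (rule sum_mono)
    fix k assume k: "k \<in> {1..m}"
    have "measure M (A k \<union> B k) \<le> measure M (A k) + measure M (B k)"
      using key[OF k] by (intro measure_Un_le) auto
    also have "\<dots> \<le> eps / real m" using key[OF k] by simp
    finally show "measure M (A k \<union> B k) \<le> eps / real m" .
  qed
  also have "\<dots> \<le> eps" using eps_pos by (cases "m = 0") auto
  finally have mU: "measure M U \<le> eps" .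
  have "1 - eps \<le> measure M (space M - U)" using MP.prob_compl[OF Usets] mU by simp
  also have "\<dots> \<le> measure M S" by (rule MP.finite_measure_mono[OF sub Smeas])
  finally show ?thesis unfolding S_def M_def .
qed

end
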